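(* Let $A_1,\dots,A_m\in\mathbb{S}^n$, $b\in\mathbb{R}^m$, $C\in\mathbb{S}^n$, and let Assumption 1 hold for some $p\ge n$. Then every second-order critical point $Y\in\mathcal{M}_p$ of (P) is globally optimal for (P), and $X=YY^\top$ is globally optimal for (SDP).
   Context: $\mathbb{S}^n$: real symmetric $n\times n$ matrices; $\langle U,V\rangle=\operatorname{tr}(U^\top V)$. $\mathcal{A}(X)_i=\langle A_i,X\rangle$, $\mathcal{A}^*(\nu)=\sum_i\nu_iA_i$. (SDP): minimize $\langle C,X\rangle$ over $\{X\in\mathbb{S}^n:\mathcal{A}(X)=b,\ X\succeq0\}$. $\mathcal{M}_p=\{Y\in\mathbb{R}^{n\times p}:\mathcal{A}(YY^\top)=b\}$; (P): minimize $\langle CY,Y\rangle$ over $\mathcal{M}_p$. Assumption 1 (for $p$ with $\mathcal{M}_p\ne\emptyset$): either (a) $A_1Y,\dots,A_mY$ are linearly independent for all $Y\in\mathcal{M}_p$, or (b) $\operatorname{span}\{A_1Y,\dots,A_mY\}$ has constant dimension on an open neighborhood of $\mathcal{M}_p$. For $Y\in\mathcal{M}_p$: $T_Y=\{\dot Y:\langle A_iY,\dot Y\rangle=0\ \forall i\}$; $G_{ij}=\langle A_iY,A_jY\rangle$, $\mu=G^\dagger\mathcal{A}(CYY^\top)$, $S(Y)=C-\mathcal{A}^*(\mu)$. $Y$ is second-order critical if $S(Y)Y=0$ and $\langle\dot Y,S(Y)\dot Y\rangle\ge0$ for all $\dot Y\in T_Y$. *)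

theory Defs
  imports "HOL-Analysis.Analysis"
begin

definition frob :: "real^'p^'n \<Rightarrow> real^'p^'n \<Rightarrow> real" where
  "frob U V = trace (transpose U ** V)"

definition sym_mat :: "real^'n^'n \<Rightarrow> bool" where
  "sym_mat X \<longleftrightarrow> transpose X = X"

definition psd :: "real^'n^'n \<Rightarrow> bool" where
  "psd X \<longleftrightarrow> (\<forall>x. 0 \<le> x \<bullet> (X *v x))"

definition pinv :: "real^'m^'m \<Rightarrow> real^'m^'m" where
  "pinv G = (THE H. G ** H ** G = G \<and> H ** G ** H = H \<and>
                    transpose (G ** H) = G ** H \<and> transpose (H ** G) = H ** G)"

definition Amap :: "('m::finite \<Rightarrow> real^'n^'n) \<Rightarrow> real^'n^'n \<Rightarrow> real^'m" where
  "Amap A X = (\<chi> i. frob (A i) X)"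

definition Aadj :: "('m::finite \<Rightarrow> real^'n^'n) \<Rightarrow> real^'m \<Rightarrow> real^'n^'n" where
  "Aadj A \<nu> = (\<Sum>i\<in>UNIV. (\<nu> $ i) *\<^sub>R A i)"

definition sdp_feasible :: "('m::finite \<Rightarrow> real^'n^'n) \<Rightarrow> real^'m \<Rightarrow> real^'n^'n \<Rightarrow> bool" where
  "sdp_feasible A b X \<longleftrightarrow> sym_mat X \<and> Amap A X = b \<and> psd X"

definition sdp_optimal ::
  "('m::finite \<Rightarrow> real^'n^'n) \<Rightarrow> real^'m \<Rightarrow> real^'n^'n \<Rightarrow> real^'n^'n \<Rightarrow> bool" where
  "sdp_optimal A b C X \<longleftrightarrow> sdp_feasible A b X \<and>
     (\<forall>X'. sdp_feasible A b X' \<longrightarrow> frob C X \<le> frob C X')"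

definition Mp :: "('m::finite \<Rightarrow> real^'n^'n) \<Rightarrow> real^'m \<Rightarrow> (real^'p^'n) set" where
  "Mp A b = {Y. Amap A (Y ** transpose Y) = b}"

definition P_obj :: "real^'n^'n \<Rightarrow> real^'p^'n \<Rightarrow> real" where
  "P_obj C Y = frob (C ** Y) Y"

definition P_optimal ::
  "('m::finite \<Rightarrow> real^'n^'n) \<Rightarrow> real^'m \<Rightarrow> real^'n^'n \<Rightarrow> real^'p^'n \<Rightarrow> bool" where
  "P_optimal A b C Y \<longleftrightarrow> Y \<in> Mp A b \<and> (\<forall>Y'::real^'p^'n. Y' \<in> Mp A b \<longrightarrow> P_obj C Y \<le> P_obj C Y')"

text \<open>Assumption 1 (for the given p, encoded by the column type 'p).\<close>
definition assumption1 :: "('m::finite \<Rightarrow> real^'n^'n) \<Rightarrow> real^'m \<Rightarrow> 'p::finite itself \<Rightarrow> bool" where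
  "assumption1 A b (_::'p itself) \<longleftrightarrow>
     (\<forall>Y::real^'p^'n. Y \<in> Mp A b \<longrightarrow>
        (\<forall>c::'m \<Rightarrow> real. (\<Sum>i\<in>UNIV. c i *\<^sub>R (A i ** Y)) = 0 \<longrightarrow> (\<forall>i. c i = 0)))
   \<or> (\<exists>U::(real^'p^'n) set. open U \<and> Mp A b \<subseteq> U \<and>
        (\<exists>d. \<forall>Y\<in>U. dim (span (range (\<lambda>i. A i ** Y))) = d))"

definition tangent :: "('m::finite \<Rightarrow> real^'n^'n) \<Rightarrow> real^'p^'n \<Rightarrow> (real^'p^'n) set" where
  "tangent A Y = {Yd. \<forall>i. frob (A i ** Y) Yd = 0}"

definition gram :: "('m::finite \<Rightarrow> real^'n^'n) \<Rightarrow> real^'p^'n \<Rightarrow> real^'m^'m" where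
  "gram A Y = (\<chi> i j. frob (A i ** Y) (A j ** Y))"

definition mult :: "('m::finite \<Rightarrow> real^'n^'n) \<Rightarrow> real^'n^'n \<Rightarrow> real^'p^'n \<Rightarrow> real^'m" where
  "mult A C Y = pinv (gram A Y) *v Amap A (C ** Y ** transpose Y)"

definition Smat :: "('m::finite \<Rightarrow> real^'n^'n) \<Rightarrow> real^'n^'n \<Rightarrow> real^'p^'n \<Rightarrow> real^'n^'n" where
  "Smat A C Y = C - Aadj A (mult A C Y)"

definition second_order_critical ::
  "('m::finite \<Rightarrow> real^'n^'n) \<Rightarrow> real^'m \<Rightarrow> real^'n^'n \<Rightarrow> real^'p^'n \<Rightarrow> bool" where
  "second_order_critical A b C Y \<longleftrightarrow> Y \<in> Mp A b \<and> Smat A C Y ** Y = 0 \<and>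
     (\<forall>Yd\<in>tangent A Y. 0 \<le> frob Yd (Smat A C Y ** Yd))"

end

theory Submission imports Defs begin

lemma frob_eq: "frob U V = (\<Sum>i\<in>UNIV. \<Sum>j\<in>UNIV. U$i$j * V$i$j)"
  unfolding frob_def trace_def matrix_matrix_mult_def transpose_def
  by (simp add: sum.swap[of _ "UNIV::'b set"])

lemma quad_eq: "(y::real^'n) \<bullet> (M *v z) = (\<Sum>i\<in>UNIV. \<Sum>j\<in>UNIV. y$i * M$i$j * z$j)"
  unfolding inner_vec_def matrix_vector_mult_def
  by (simp add: sum_distrib_left mult.assoc)

lemma sym_entry: "sym_mat X \<Longrightarrow> X$i$j = X$j$i"
  unfolding sym_mat_def by (metis transpose_def vec_lambda_beta)

lemma sym_quad: assumes "sym_mat X" shows "(y::real^'n) \<bullet> (X *v z) = z \<bullet> (X *v y)"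
  unfolding quad_eq using sym_entry[OF assms]
  by (subst sum.swap) (simp add: mult.commute mult.left_commute)


definition outer :: "real \<Rightarrow> real^'n \<Rightarrow> real^'n^'n" where
  "outer r w = (\<chi> i j. r * (w$i * w$j))"

lemma outer_mv: "outer r w *v y = (r * (w \<bullet> y)) *\<^sub>R w"
  unfolding outer_def by (simp add: vec_eq_iff matrix_vector_mult_def inner_vec_def sum_distrib_left sum_distrib_right mult_ac)

lemma frob_outer: "frob S (outer r w) = r * (w \<bullet> (S *v w))"
  unfolding frob_eq quad_eq outer_def by (simp add: sum_distrib_left mult_ac)

lemma frob_diff: "frob S (X - Z) = frob S X - frob S Z"
  unfolding frob_eq by (simp add: sum_subtractf right_diff_distrib)

lemma quad_expand:
  fixes X :: "real^'n^'n"
  assumes "sym_mat X"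
  shows "(a + t *\<^sub>R b) \<bullet> (X *v (a + t *\<^sub>R b)) = a \<bullet> (X *v a) + 2 * t * (b \<bullet> (X *v a)) + t\<^sup>2 * (b \<bullet> (X *v b))"
proof -
  have "a \<bullet> (X *v b) = b \<bullet> (X *v a)" by (rule sym_quad[OF assms])
  then show ?thesis
    by (simp add: matrix_vector_right_distrib matrix_vector_mult_scaleR inner_add_left inner_add_right
       algebra_simps power2_eq_square)
qed

lemma psd_frob_aux:
  fixes S :: "real^'n^'n"
  assumes S: "psd S"
  shows "sym_mat X \<Longrightarrow> psd X \<Longrightarrow> CARD('n) - dim {y. X *v y = 0} = k \<Longrightarrow> 0 \<le> frob S X"
proof (induction k arbitrary: X rule: less_induct)
  case (less k X)
  show ?case
  proof (cases "\<forall>x. X *v x = 0")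
    case True
    then have "X = 0" by (simp add: matrix_eq)
    then show ?thesis by (simp add: frob_eq)
  next
    case False
    then obtain x where wx: "X *v x \<noteq> 0" by auto
    define w where "w = X *v x"
    define c where "c = x \<bullet> w"
    have q: "\<And>v. 0 \<le> v \<bullet> (X *v v)" using less.prems(2) unfolding psd_def by auto
    have c0: "c \<ge> 0" using q[of x] unfolding c_def w_def .
    have c: "c > 0"
    proof (rule ccontr)
      assume "\<not> c > 0"
      then have cz: "c = 0" using c0 by simp
      define qw where "qw = w \<bullet> (X *v w)"
      have qw: "qw \<ge> 0" using q[of w] unfolding qw_def .
      have ww: "w \<bullet> w > 0" using wx unfolding w_def by simp
      define t where "t = (w \<bullet> w) / (qw + 1)"
      have t: "t > 0" using ww qw unfolding t_def by simp
      have "0 \<le> (x + (-t) *\<^sub>R w) \<bullet> (X *v (x + (-t) *\<^sub>R w))" by (rule q)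
      also have "\<dots> = c + 2 * (-t) * (w \<bullet> w) + (-t)\<^sup>2 * qw"
        unfolding quad_expand[OF less.prems(1)] c_def qw_def w_def
        using sym_quad[OF less.prems(1), of x x] by simp
      finally have "2 * t * (w \<bullet> w) \<le> t\<^sup>2 * qw" using cz by simp
      then have "2 * (w \<bullet> w) \<le> t * qw" using t by (simp add: power2_eq_square)
      moreover have "t * qw < w \<bullet> w"
      proof -
        have "t * qw = (w \<bullet> w) * (qw / (qw + 1))" unfolding t_def by simp
        also have "\<dots> < (w \<bullet> w) * 1" using ww qw by (intro mult_strict_left_mono) auto
        finally show ?thesis by simp
      qed
      ultimately show False using ww by simp
    qed
    define X' where "X' = X - outer (1/c) w"
    have mv: "\<And>y. X' *v y = X *v y - ((1/c) * (w \<bullet> y)) *\<^sub>R w"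
      unfolding X'_def by (simp add: matrix_vector_mult_diff_rdistrib outer_mv)
    have wy: "\<And>y. w \<bullet> y = y \<bullet> (X *v x)" unfolding w_def
      using sym_quad[OF less.prems(1)] by (simp add: inner_commute)
    have symX': "sym_mat X'"
      using sym_entry[OF less.prems(1)] unfolding X'_def sym_mat_def outer_def
      by (simp add: vec_eq_iff transpose_def mult_ac)
    have psdX': "psd X'"
      unfolding psd_def
    proof
      fix y
      define b where "b = y \<bullet> (X *v x)"
      have "0 \<le> (y + (- b / c) *\<^sub>R x) \<bullet> (X *v (y + (- b / c) *\<^sub>R x))" by (rule q)
      also have "\<dots> = y \<bullet> (X *v y) + 2 * (- b / c) * b + (- b / c)\<^sup>2 * c"
        unfolding quad_expand[OF less.prems(1)] c_def w_def b_def
        using sym_quad[OF less.prems(1), of x y] by simp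
      also have "\<dots> = y \<bullet> (X *v y) - b * b / c"
        using c by (simp add: power2_eq_square field_simps)
      also have "\<dots> = y \<bullet> (X' *v y)"
        unfolding mv using wy[of y] unfolding b_def by (simp add: inner_diff_right inner_commute)
      finally show "0 \<le> y \<bullet> (X' *v y)" .
    qed
    have ker: "{y. X *v y = 0} \<subset> {y. X' *v y = 0}"
    proof
      show "{y. X *v y = 0} \<subseteq> {y. X' *v y = 0}"
      proof
        fix y assume "y \<in> {y. X *v y = 0}"
        then have "X *v y = 0" by simp
        moreover have "w \<bullet> y = 0" unfolding w_def
          using sym_quad[OF less.prems(1), of x y] \<open>X *v y = 0\<close> by (simp add: inner_commute)
        ultimately show "y \<in> {y. X' *v y = 0}" using mv by simp
      qed
      have "X' *v x = 0" using mv[of x] c unfolding c_def by (simp add: inner_commute w_def)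
      then show "{y. X *v y = 0} \<noteq> {y. X' *v y = 0}" using wx by auto
    qed
    have sub: "\<And>M::real^'n^'n. subspace {y. M *v y = 0}"
      using real_vector.linear_subspace_kernel[OF matrix_vector_mul_linear] by blast
    have "dim {y. X *v y = 0} < dim {y. X' *v y = 0}"
      proof (rule dim_psubset)
      have e1: "span {y. X *v y = 0} = {y. X *v y = 0}" using sub by (simp add: real_vector.span_eq_iff)
      have e2: "span {y. X' *v y = 0} = {y. X' *v y = 0}" using sub by (simp add: real_vector.span_eq_iff)
      show "span {y. X *v y = 0} \<subset> span {y. X' *v y = 0}" unfolding e1 e2 by (rule ker)
    qed
    moreover have "dim {y. X' *v y = 0} \<le> CARD('n)" by (rule dim_subset_UNIV_cart)
    ultimately have "CARD('n) - dim {y. X' *v y = 0} < k" using less.prems(3) by linarith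
    then have "0 \<le> frob S X'" using less.IH symX' psdX' by blast
    moreover have "frob S X = frob S X' + (1/c) * (w \<bullet> (S *v w))"
      unfolding X'_def frob_diff frob_outer by simp
    moreover have "0 \<le> (1/c) * (w \<bullet> (S *v w))" using S c unfolding psd_def by simp
    ultimately show ?thesis by linarith
  qed
qed

lemma psd_frob:
  fixes S X :: "real^'n^'n"
  assumes "psd S" "sym_mat X" "psd X"
  shows "0 \<le> frob S X"
  using psd_frob_aux[OF assms(1) assms(2,3) refl] .


lemma sym_iff: "sym_mat X \<longleftrightarrow> (\<forall>i j. X$i$j = X$j$i)"
  unfolding sym_mat_def by (auto simp: vec_eq_iff transpose_def)

lemma frob_outer2: fixes z :: "real^'p" shows "frob (M ** Y) (\<chi> a k. x$a * z$k) = (x::real^'n) \<bullet> (M *v ((Y::real^'p^'n) *v z))"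
proof -
  have "frob (M ** Y) (\<chi> a k. x$a * z$k) = (\<Sum>a\<in>UNIV. \<Sum>k\<in>UNIV. \<Sum>b\<in>UNIV. x$a * M$a$b * (Y$b$k * z$k))"
    unfolding frob_eq matrix_matrix_mult_def by (simp add: sum_distrib_left sum_distrib_right mult_ac)
  also have "\<dots> = (\<Sum>a\<in>UNIV. \<Sum>b\<in>UNIV. \<Sum>k\<in>UNIV. x$a * M$a$b * (Y$b$k * z$k))"
    by (rule sum.cong[OF refl], rule sum.swap)
  also have "\<dots> = x \<bullet> (M *v (Y *v z))"
    unfolding quad_eq by (simp add: matrix_vector_mult_def sum_distrib_left mult_ac)
  finally show ?thesis .
qed

lemma frob_outer3: fixes z :: "real^'p" shows "frob (\<chi> a k. x$a * z$k) (M ** (\<chi> a k. x$a * z$k)) = (z \<bullet> z) * ((x::real^'n) \<bullet> (M *v x))"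
proof -
  have "frob (\<chi> a k. x$a * z$k) (M ** (\<chi> a k. x$a * z$k)) = (\<Sum>a\<in>UNIV. \<Sum>k::'p\<in>UNIV. \<Sum>b\<in>UNIV. (z$k * z$k) * (x$a * M$a$b * x$b))"
    unfolding frob_eq matrix_matrix_mult_def by (simp add: sum_distrib_left sum_distrib_right mult_ac)
  also have "\<dots> = (\<Sum>a\<in>UNIV. \<Sum>b\<in>UNIV. \<Sum>k::'p\<in>UNIV. (z$k * z$k) * (x$a * M$a$b * x$b))"
    by (rule sum.cong[OF refl], rule sum.swap)
  also have "\<dots> = (z \<bullet> z) * (x \<bullet> (M *v x))"
    by (simp add: quad_eq inner_vec_def[of z z] sum_distrib_left sum_distrib_right mult_ac)
  finally show ?thesis .
qed

lemma frob_YYt: fixes Y :: "real^'p^'n" shows "frob M (Y ** transpose Y) = frob (transpose M ** Y) (Y::real^'p^'n)"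
proof -
  have "frob M (Y ** transpose Y) = (\<Sum>a\<in>UNIV. \<Sum>b\<in>UNIV. \<Sum>k::'p\<in>UNIV. M$a$b * Y$a$k * Y$b$k)"
    unfolding frob_eq matrix_matrix_mult_def transpose_def by (simp add: sum_distrib_left mult_ac)
  also have "\<dots> = (\<Sum>b\<in>UNIV. \<Sum>a\<in>UNIV. \<Sum>k::'p\<in>UNIV. M$a$b * Y$a$k * Y$b$k)"
    by (rule sum.swap)
  also have "\<dots> = (\<Sum>b\<in>UNIV. \<Sum>k::'p\<in>UNIV. \<Sum>a\<in>UNIV. M$a$b * Y$a$k * Y$b$k)"
    by (rule sum.cong[OF refl], rule sum.swap)
  also have "\<dots> = frob (transpose M ** Y) Y"
    unfolding frob_eq matrix_matrix_mult_def transpose_def by (simp add: sum_distrib_left sum_distrib_right mult_ac)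
  finally show ?thesis .
qed

lemma frob_Aadj: "frob (Aadj A \<nu>) X = \<nu> \<bullet> Amap A X"
proof -
  have "frob (Aadj A \<nu>) X = (\<Sum>a\<in>UNIV. \<Sum>b\<in>UNIV. \<Sum>i\<in>UNIV. \<nu>$i * (A i$a$b * X$a$b))"
    unfolding Aadj_def frob_eq by (simp add: sum_component sum_distrib_left sum_distrib_right mult_ac)
  also have "\<dots> = (\<Sum>a\<in>UNIV. \<Sum>i\<in>UNIV. \<Sum>b\<in>UNIV. \<nu>$i * (A i$a$b * X$a$b))"
    by (rule sum.cong[OF refl], rule sum.swap)
  also have "\<dots> = (\<Sum>i\<in>UNIV. \<Sum>a\<in>UNIV. \<Sum>b\<in>UNIV. \<nu>$i * (A i$a$b * X$a$b))"
    by (rule sum.swap)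
  also have "\<dots> = \<nu> \<bullet> Amap A X"
    unfolding Amap_def frob_eq inner_vec_def by (simp add: sum_distrib_left)
  finally show ?thesis .
qed

lemma frob_add: "frob (S + M) X = frob S X + frob M X"
  unfolding frob_eq by (simp add: sum.distrib distrib_right)

lemma frob_zero: "frob 0 X = 0"
  unfolding frob_eq by simp

lemma sym_Aadj: assumes "\<forall>i. sym_mat (A i)" shows "sym_mat (Aadj A \<nu>)"
  using assms unfolding sym_iff Aadj_def by (simp add: sum_component)

lemma sym_diff: "sym_mat X \<Longrightarrow> sym_mat Z \<Longrightarrow> sym_mat (X - Z)"
  unfolding sym_iff by simp

lemma YYt_feasible: fixes Y :: "real^'p^'n" assumes "Y \<in> Mp A b" shows "sdp_feasible A b (Y ** transpose Y)"
  unfolding sdp_feasible_def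
proof (intro conjI)
  show "sym_mat (Y ** transpose Y)" unfolding sym_mat_def by (simp add: matrix_transpose_mul)
  show "Amap A (Y ** transpose Y) = b" using assms unfolding Mp_def by simp
  show "psd (Y ** transpose Y)" unfolding psd_def
  proof
    fix x :: "real^'n"
    have "x \<bullet> ((Y ** transpose Y) *v x) = (x v* Y) \<bullet> (transpose Y *v x)"
      by (metis dot_lmul_matrix matrix_vector_mul_assoc)
    also have "x v* Y = transpose Y *v x"
      by (metis transpose_transpose vector_transpose_matrix)
    finally show "0 \<le> x \<bullet> ((Y ** transpose Y) *v x)" by simp
  qed
qed


theorem corollary2:
  fixes A :: "'m::finite \<Rightarrow> real^'n^'n" and b :: "real^'m" and C :: "real^'n^'n"
    and Y :: "real^'p^'n"
  assumes "\<forall>i. sym_mat (A i)" and "sym_mat C"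
    and "CARD('n) \<le> CARD('p)"
    and "assumption1 A b TYPE('p)"
    and "second_order_critical A b C Y"
  shows "P_optimal A b C Y \<and> sdp_optimal A b C (Y ** transpose Y)"
proof -
  define S where "S = Smat A C Y"
  define mu where "mu = mult A C Y"
  have YM: "Y \<in> Mp A b" and SY: "S ** Y = 0"
    and tang: "\<And>Yd. Yd \<in> tangent A Y \<Longrightarrow> 0 \<le> frob Yd (S ** Yd)"
    using assms(5) unfolding second_order_critical_def S_def by auto
  have CS: "C = S + Aadj A mu" unfolding S_def Smat_def mu_def by simp
  have symS: "sym_mat S" unfolding S_def Smat_def
    by (rule sym_diff[OF assms(2) sym_Aadj[OF assms(1)]])
  have psdS: "psd S" unfolding psd_def
  proof
    fix x :: "real^'n"
    show "0 \<le> x \<bullet> (S *v x)"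
    proof (cases "\<exists>z. z \<noteq> 0 \<and> Y *v z = 0")
      case True
      then obtain z where z: "z \<noteq> 0" "Y *v z = 0" by auto
      define Yd :: "real^'p^'n" where "Yd = (\<chi> a k. x$a * z$k)"
      have "Yd \<in> tangent A Y" unfolding tangent_def Yd_def
        using frob_outer2[of "A _" Y x z] z(2) by simp
      then have "0 \<le> frob Yd (S ** Yd)" by (rule tang)
      then have "0 \<le> (z \<bullet> z) * (x \<bullet> (S *v x))" using frob_outer3[of x z S] by (simp add: Yd_def)
      moreover have "z \<bullet> z > 0" using z(1) by simp
      ultimately show ?thesis by (simp add: zero_le_mult_iff)
    next
      case False
      have inj: "inj ((*v) Y)"
      proof (rule injI)
        fix u v assume "Y *v u = Y *v v"
        then have "Y *v (u - v) = 0" by (simp add: matrix_vector_mult_diff_distrib)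
        then show "u = v" using False by (metis eq_iff_diff_eq_0)
      qed
      have "dim (range ((*v) Y)) = dim (UNIV :: (real^'p) set)"
        by (rule dim_image_eq) (use inj in \<open>auto simp: inj_on_def inj_def\<close>)
      also have "\<dots> = CARD('p)" by simp
      finally have "dim (range ((*v) Y)) \<ge> DIM(real^'n)" using assms(3) by simp
      then have "dim (range ((*v) Y)) = DIM(real^'n)"
        using dim_subset_UNIV_cart[of "range ((*v) Y)"] by simp
      then have "span (range ((*v) Y)) = UNIV" by (simp only: dim_eq_full)
      moreover have "subspace (range ((*v) Y))"
        by (rule real_vector.linear_subspace_image[OF matrix_vector_mul_linear]) simp
      ultimately have "range ((*v) Y) = UNIV"
        by (metis real_vector.span_eq_iff)
      then obtain z where "x = Y *v z" by (metis UNIV_I image_iff)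
      then have "S *v x = 0" using SY by (simp add: matrix_vector_mul_assoc)
      then show ?thesis by simp
    qed
  qed
  have fC: "\<And>X. frob C X = frob S X + mu \<bullet> Amap A X"
    unfolding CS frob_add frob_Aadj ..
  have fY: "frob C (Y ** transpose Y) = mu \<bullet> b"
  proof -
    have "frob S (Y ** transpose Y) = 0"
      unfolding frob_YYt using symS SY unfolding sym_mat_def by (simp add: frob_zero)
    then show ?thesis using fC YM unfolding Mp_def by simp
  qed
  have sdp: "sdp_optimal A b C (Y ** transpose Y)"
    unfolding sdp_optimal_def
  proof (intro conjI allI impI)
    show "sdp_feasible A b (Y ** transpose Y)" by (rule YYt_feasible[OF YM])
    fix X' assume "sdp_feasible A b X'"
    then have "sym_mat X'" "psd X'" "Amap A X' = b" unfolding sdp_feasible_def by auto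
    then show "frob C (Y ** transpose Y) \<le> frob C X'"
      using fY fC[of X'] psd_frob[OF psdS] by simp
  qed
  have Pobj: "\<And>Z::real^'p^'n. P_obj C Z = frob C (Z ** transpose Z)"
    unfolding P_obj_def frob_YYt using assms(2) unfolding sym_mat_def by simp
  have "P_optimal A b C Y"
    unfolding P_optimal_def
  proof (intro conjI allI impI)
    show "Y \<in> Mp A b" by (rule YM)
    fix Y' :: "real^'p^'n" assume "Y' \<in> Mp A b"
    then show "P_obj C Y \<le> P_obj C Y'"
      unfolding Pobj using sdp YYt_feasible unfolding sdp_optimal_def by blast
  qed
  then show ?thesis using sdp by simp
qed

end
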